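(* Let $\mathbb{Z}_2$ be the two-element field regarded as a semiring. The generalised multiset monad $\mathbf{M}_{\mathbb{Z}_2}$ preserves the equation $x\cdot(y\cdot y)=y\cdot x$ for a binary operation symbol $\cdot$. Moreover, $\mathbf{M}_{\mathbb{Z}_2}$ is not relevant.
   Context: For a semiring $\mathbb S$, $\mathbf{M}_{\mathbb S}X$ is the set of finitely supported maps $\xi\colon X\to\mathbb S$ (written $\sum_x\xi(x)x$); $(\mathbf{M}_{\mathbb S}f)(\xi)(y)=\sum_{f(x)=y}\xi(x)$; $\eta(x)=1\cdot x$; $\mu(\sum_i s_i\sum_j t_{ij}x_{ij})=\sum_{i,j}s_it_{ij}x_{ij}$; monoidal structure $\psi(\xi_1,\xi_2)(x,y)=\xi_1(x)\xi_2(y)$. For a $\Sigma$-algebra $\mathcal A$ on $A$, $\widehat T\mathcal A$ has carrier $TA$ and operations $T\sigma_{\mathcal A}\circ\psi^{\mathrm{ar}(\sigma)}$; $T$ preserves an equation if $\widehat T\mathcal A$ satisfies it whenever $\mathcal A$ does. $T$ is relevant if $\psi_{A,B}\circ\langle T\pi_1,T\pi_2\rangle=\mathrm{id}_{T(A\times B)}$ for all $A,B$. *)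

theory Defs
  imports Main "HOL-Library.Z2"
begin

text \<open>Generalised multiset monad M_S over a semiring S: M_S X is the set of
  finitely supported maps X \<Rightarrow> S.  We represent elements as functions
  with finite support.\<close>

definition fsupp :: "('x \<Rightarrow> 's::zero) \<Rightarrow> bool" where
  "fsupp \<xi> \<longleftrightarrow> finite {x. \<xi> x \<noteq> 0}"

definition Mmap :: "('x \<Rightarrow> 'y) \<Rightarrow> ('x \<Rightarrow> 's::comm_monoid_add) \<Rightarrow> 'y \<Rightarrow> 's" where
  "Mmap f \<xi> y = (\<Sum>x \<in> {x. \<xi> x \<noteq> 0 \<and> f x = y}. \<xi> x)"

definition Mpsi :: "('x \<Rightarrow> 's::times) \<Rightarrow> ('y \<Rightarrow> 's) \<Rightarrow> 'x \<times> 'y \<Rightarrow> 's" where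
  "Mpsi \<xi>1 \<xi>2 = (\<lambda>(x, y). \<xi>1 x * \<xi>2 y)"

definition Mlift2 :: "('a \<Rightarrow> 'a \<Rightarrow> 'a) \<Rightarrow> ('a \<Rightarrow> 's::comm_semiring_1) \<Rightarrow> ('a \<Rightarrow> 's) \<Rightarrow> 'a \<Rightarrow> 's" where
  "Mlift2 m \<xi>1 \<xi>2 = Mmap (case_prod m) (Mpsi \<xi>1 \<xi>2)"

text \<open>Relevance condition of M_S at the pair of sets A = UNIV::'a, B = UNIV::'b.
  M_S is relevant iff this holds for all A, B.\<close>
definition M_relevant_at :: "'s::comm_semiring_1 itself \<Rightarrow> 'a itself \<Rightarrow> 'b itself \<Rightarrow> bool" where
  "M_relevant_at _ _ _ \<longleftrightarrow>
     (\<forall>\<zeta> :: 'a \<times> 'b \<Rightarrow> 's. fsupp \<zeta> \<longrightarrow> Mpsi (Mmap fst \<zeta>) (Mmap snd \<zeta>) = \<zeta>)"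

end

theory Submission
  imports Defs
begin

lemma bit_self_add: "(a::bit) + a = 0"
  by (metis bit_2_eq_0 mult_2 mult_zero_left)

lemma bit_sq: "(a::bit) * a = a"
  by (cases "a = 0") auto

lemma Mmap_sum:
  assumes "finite A" "{x. \<xi> x \<noteq> 0} \<subseteq> A"
  shows "Mmap f \<xi> y = (\<Sum>x\<in>A. of_bool (f x = y) * (\<xi> x :: 's::comm_semiring_1))"
proof -
  have "Mmap f \<xi> y = (\<Sum>x\<in>{x\<in>A. f x = y}. \<xi> x)"
    unfolding Mmap_def
    by (rule sum.mono_neutral_left) (use assms in auto)
  also have "\<dots> = (\<Sum>x\<in>A. if f x = y then \<xi> x else 0)"
    using assms(1) by (rule sum.inter_filter)
  also have "\<dots> = (\<Sum>x\<in>A. of_bool (f x = y) * \<xi> x)"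
    by (rule sum.cong) auto
  finally show ?thesis .
qed

lemma Mlift2_sum:
  assumes "finite A" "{x. \<xi>1 x \<noteq> 0} \<subseteq> A" "finite B" "{x. \<xi>2 x \<noteq> 0} \<subseteq> B"
  shows "Mlift2 m \<xi>1 \<xi>2 z = (\<Sum>a\<in>A. \<Sum>b\<in>B. of_bool (m a b = z) * (\<xi>1 a * (\<xi>2 b :: 's::comm_semiring_1)))"
proof -
  have "{x. Mpsi \<xi>1 \<xi>2 x \<noteq> 0} \<subseteq> A \<times> B"
    using assms by (auto simp: Mpsi_def)
  then have "Mlift2 m \<xi>1 \<xi>2 z = (\<Sum>p\<in>A\<times>B. of_bool (case_prod m p = z) * Mpsi \<xi>1 \<xi>2 p)"
    unfolding Mlift2_def using assms by (intro Mmap_sum) auto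
  also have "\<dots> = (\<Sum>(a,b)\<in>A\<times>B. of_bool (m a b = z) * (\<xi>1 a * \<xi>2 b))"
    by (rule sum.cong) (auto simp: Mpsi_def)
  also have "\<dots> = (\<Sum>a\<in>A. \<Sum>b\<in>B. of_bool (m a b = z) * (\<xi>1 a * \<xi>2 b))"
    by (simp only: sum.cartesian_product)
  finally show ?thesis .
qed

lemma Mlift2_supp:
  "{w. Mlift2 m \<xi>1 \<xi>2 w \<noteq> 0} \<subseteq> case_prod m ` ({x. \<xi>1 x \<noteq> 0} \<times> {x. \<xi>2 x \<noteq> 0})"
proof
  fix w assume "w \<in> {w. Mlift2 m \<xi>1 \<xi>2 w \<noteq> 0}"
  then have "Mmap (case_prod m) (Mpsi \<xi>1 \<xi>2) w \<noteq> 0" by (simp add: Mlift2_def)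
  then have "{p. Mpsi \<xi>1 \<xi>2 p \<noteq> 0 \<and> case_prod m p = w} \<noteq> {}"
    unfolding Mmap_def by (metis sum.empty)
  then obtain p where "p \<in> {p. Mpsi \<xi>1 \<xi>2 p \<noteq> 0 \<and> case_prod m p = w}" by blast
  then obtain a b where "Mpsi \<xi>1 \<xi>2 (a,b) \<noteq> 0" "m a b = w" by (cases p) auto
  then show "w \<in> case_prod m ` ({x. \<xi>1 x \<noteq> 0} \<times> {x. \<xi>2 x \<noteq> 0})"
    by (auto simp: Mpsi_def intro!: image_eqI[of _ _ "(a,b)"])
qed

lemma sym_sum_bit:
  assumes "finite T" "\<And>a b. g a b = g b a"
  shows "(\<Sum>a\<in>T. \<Sum>b\<in>T. g a b) = (\<Sum>a\<in>T. (g a a :: bit))"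
  using assms(1)
proof (induction T rule: finite_induct)
  case empty then show ?case by simp
next
  case (insert t T)
  define P where "P = (\<Sum>b\<in>T. g t b)"
  define X where "X = (\<Sum>a\<in>T. \<Sum>b\<in>T. g a b)"
  have Q: "(\<Sum>a\<in>T. g a t) = P" using assms(2) by (simp add: P_def)
  have "(\<Sum>a\<in>insert t T. \<Sum>b\<in>insert t T. g a b)
      = (g t t + P) + ((\<Sum>a\<in>T. g a t) + X)"
    unfolding P_def X_def by (simp only: sum.insert[OF insert(1,2)] sum.distrib) (simp only: add_ac)
  also have "\<dots> = g t t + (P + P) + X" unfolding Q by (simp only: add_ac)
  also have "\<dots> = g t t + X" by (simp only: bit_self_add add_0_right)
  also have "\<dots> = (\<Sum>a\<in>insert t T. g a a)"
    by (simp only: sum.insert[OF insert(1,2)] X_def insert(3))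
  finally show ?case .
qed

lemma swap3:
  "(\<Sum>w\<in>W. c w * (d * (\<Sum>a\<in>T. \<Sum>b\<in>U. h a b w * e a b))) =
   (\<Sum>a\<in>T. \<Sum>b\<in>U. d * e a b * (\<Sum>w\<in>W. c w * (h a b w :: 's::comm_semiring_1)))"
proof -
  have "(\<Sum>w\<in>W. c w * (d * (\<Sum>a\<in>T. \<Sum>b\<in>U. h a b w * e a b))) =
        (\<Sum>w\<in>W. \<Sum>a\<in>T. \<Sum>b\<in>U. d * e a b * (c w * h a b w))"
    by (simp add: sum_distrib_left mult_ac)
  also have "\<dots> = (\<Sum>a\<in>T. \<Sum>w\<in>W. \<Sum>b\<in>U. d * e a b * (c w * h a b w))"
    by (rule sum.swap)
  also have "\<dots> = (\<Sum>a\<in>T. \<Sum>b\<in>U. \<Sum>w\<in>W. d * e a b * (c w * h a b w))"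
    by (intro sum.cong refl sum.swap)
  also have "\<dots> = (\<Sum>a\<in>T. \<Sum>b\<in>U. d * e a b * (\<Sum>w\<in>W. c w * h a b w))"
    by (simp add: sum_distrib_left)
  finally show ?thesis .
qed

lemma comm:
  assumes E: "\<forall>x y. m x (m y y) = m y x"
  shows "m x y = m y x"
proof -
  have s: "m y (m y y) = m y y" for y using E by metis
  have idem: "m (m y y) (m y y) = m y y" for y using E s by metis
  have c1: "m x (m y y) = m (m y y) x" for x y
    using E[rule_format, of x "m y y"] idem by simp
  have "m (m x x) (m y y) = m (m y y) (m x x)" using c1 by blast
  then show ?thesis using E c1 by metis
qed

theorem proposition5:
  shows "(\<forall>(m :: 'a \<Rightarrow> 'a \<Rightarrow> 'a).
            (\<forall>x y. m x (m y y) = m y x) \<longrightarrow>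
            (\<forall>\<xi>1 \<xi>2 :: 'a \<Rightarrow> bit. fsupp \<xi>1 \<longrightarrow> fsupp \<xi>2 \<longrightarrow>
               Mlift2 m \<xi>1 (Mlift2 m \<xi>2 \<xi>2) = Mlift2 m \<xi>2 \<xi>1))
         \<and> \<not> M_relevant_at TYPE(bit) TYPE(nat) TYPE(nat)"
proof (intro conjI allI impI)
  fix m :: "'a \<Rightarrow> 'a \<Rightarrow> 'a" and \<xi>1 \<xi>2 :: "'a \<Rightarrow> bit"
  assume E: "\<forall>x y. m x (m y y) = m y x" and f1: "fsupp \<xi>1" and f2: "fsupp \<xi>2"
  define S where "S = {x. \<xi>1 x \<noteq> 0}"
  define T where "T = {x. \<xi>2 x \<noteq> 0}"
  define W where "W = case_prod m ` (T \<times> T)"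
  have fS: "finite S" and fT: "finite T" using f1 f2 by (auto simp: fsupp_def S_def T_def)
  have fW: "finite W" using fT by (simp add: W_def)
  have sW: "{w. Mlift2 m \<xi>2 \<xi>2 w \<noteq> 0} \<subseteq> W" unfolding W_def T_def by (rule Mlift2_supp)
  have cm: "m x y = m y x" for x y using comm[OF E] .
  show "Mlift2 m \<xi>1 (Mlift2 m \<xi>2 \<xi>2) = Mlift2 m \<xi>2 \<xi>1"
  proof
    fix z
    have L: "Mlift2 m \<xi>2 \<xi>2 w = (\<Sum>a\<in>T. \<Sum>b\<in>T. of_bool (m a b = w) * (\<xi>2 a * \<xi>2 b))" for w
      by (rule Mlift2_sum) (use fT in \<open>auto simp: T_def\<close>)
    have delta: "(\<Sum>w\<in>W. of_bool (m x w = z) * of_bool (m a b = w)) = (of_bool (m x (m a b) = z) :: bit)"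
      if "a \<in> T" "b \<in> T" for x a b
    proof -
      have "m a b \<in> W" using that by (auto simp: W_def)
      have "(\<Sum>w\<in>W. of_bool (m x w = z) * of_bool (m a b = w)) =
            (\<Sum>w\<in>W. if m a b = w then (of_bool (m x (m a b) = z) :: bit) else 0)"
        by (rule sum.cong) auto
      also have "\<dots> = of_bool (m x (m a b) = z)" using fW \<open>m a b \<in> W\<close> by simp
      finally show ?thesis .
    qed
    have "Mlift2 m \<xi>1 (Mlift2 m \<xi>2 \<xi>2) z =
      (\<Sum>x\<in>S. \<Sum>w\<in>W. of_bool (m x w = z) * (\<xi>1 x * Mlift2 m \<xi>2 \<xi>2 w))"
      by (rule Mlift2_sum) (use fS fW sW in \<open>auto simp: S_def\<close>)
    also have "\<dots> = (\<Sum>x\<in>S. \<Sum>a\<in>T. \<Sum>b\<in>T. \<xi>1 x * (\<xi>2 a * \<xi>2 b) *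
                      (\<Sum>w\<in>W. of_bool (m x w = z) * of_bool (m a b = w)))"
      unfolding L by (intro sum.cong refl swap3)
    also have "\<dots> = (\<Sum>x\<in>S. \<Sum>a\<in>T. \<Sum>b\<in>T. \<xi>1 x * (\<xi>2 a * \<xi>2 b) * of_bool (m x (m a b) = z))"
      by (intro sum.cong refl) (simp only: delta)
    also have "\<dots> = (\<Sum>x\<in>S. \<Sum>a\<in>T. \<xi>1 x * (\<xi>2 a * \<xi>2 a) * of_bool (m x (m a a) = z))"
      by (intro sum.cong refl sym_sum_bit fT) (simp add: cm mult_ac)
    also have "\<dots> = (\<Sum>a\<in>T. \<Sum>x\<in>S. of_bool (m a x = z) * (\<xi>2 a * \<xi>1 x))"
      by (subst sum.swap) (intro sum.cong refl, auto simp add: bit_sq E mult_ac)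
    also have "\<dots> = Mlift2 m \<xi>2 \<xi>1 z"
      by (rule Mlift2_sum[symmetric]) (use fS fT in \<open>auto simp: S_def T_def\<close>)
    finally show "Mlift2 m \<xi>1 (Mlift2 m \<xi>2 \<xi>2) z = Mlift2 m \<xi>2 \<xi>1 z" .
  qed
next
  define \<zeta> :: "nat \<times> nat \<Rightarrow> bit" where "\<zeta> = (\<lambda>p. of_bool (p \<in> {(0,0),(1,1)}))"
  have fz: "fsupp \<zeta>" unfolding fsupp_def \<zeta>_def
    by (rule finite_subset[of _ "{(0,0),(1,1)}"]) auto
  have a: "{x. \<zeta> x \<noteq> 0 \<and> fst x = 0} = {(0,0)}" by (auto simp: \<zeta>_def)
  have b: "{x. \<zeta> x \<noteq> 0 \<and> snd x = 1} = {(1,1)}" by (auto simp: \<zeta>_def)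
  have "Mpsi (Mmap fst \<zeta>) (Mmap snd \<zeta>) (0,1) = 1"
  proof -
    have "Mmap fst \<zeta> 0 = 1" unfolding Mmap_def a by (simp add: \<zeta>_def)
    moreover have "Mmap snd \<zeta> 1 = 1" unfolding Mmap_def b by (simp add: \<zeta>_def)
    ultimately show ?thesis by (simp add: Mpsi_def)
  qed
  moreover have "\<zeta> (0,1) = 0" by (simp add: \<zeta>_def)
  ultimately show "\<not> M_relevant_at TYPE(bit) TYPE(nat) TYPE(nat)"
    unfolding M_relevant_at_def using fz by (metis zero_neq_one)
qed

end
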